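(* Let $r\ge 2$ and let $f, s_1,\dots,s_r$ be functions (or distributions) on $\mathbb{R}$, and set $g_i=s_i f$ for $i=1,\dots,r$. Let $\mathrm{L}=\frac{d}{dx}$ with Fourier symbol $\hat l(\omega)=i\omega$, and let $\hat f,\hat s_i,\hat g_i$ denote Fourier transforms. Assume we are in a setting in which all convolutions below are well defined, commutative and associative, and in which the Fourier transform of the Leibniz rule $\mathrm{L}g_i=s_i\,\mathrm{L}f+f\,\mathrm{L}s_i$ reads $$\hat l(\omega)\hat g_i(\omega)=\hat s_i(\omega)\ast\big(\hat l(\omega)\hat f(\omega)\big)+\hat f(\omega)\ast\big(\hat l(\omega)\hat s_i(\omega)\big),\qquad i=1,\dots,r.$$ Suppose $\hat h$ is an annihilating filter for $\hat f$, i.e. $(\hat h\ast\hat f)(\omega)=0$. Then for all $i\neq j$ in $\{1,\dots,r\}$, $$\hat h(\omega)\ast\hat s_j(\omega)\ast\big(\hat l(\omega)\hat g_i(\omega)\big)-\hat h(\omega)\ast\hat s_i(\omega)\ast\big(\hat l(\omega)\hat g_j(\omega)\big)=0 .$$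
   Context: Parallel MRI model: $f$ is the unknown image, $s_i$ is the sensitivity map of the $i$-th receiver coil, and $g_i=s_if$ is the image seen by coil $i$; $\ast$ denotes convolution in the frequency variable $\omega$. (Constant normalization factors of the convolution theorem are suppressed as in the paper; they do not affect the conclusion.) *)

theory Defs
  imports Complex_Main "HOL-Library.Function_Algebras"
begin

definition lhat :: "real \<Rightarrow> complex" where
  "lhat w = \<i> * complex_of_real w"

definition lmul :: "(real \<Rightarrow> complex) \<Rightarrow> (real \<Rightarrow> complex)" where
  "lmul u = (\<lambda>w. lhat w * u w)"

end

theory Submission
  imports Defs
begin

theorem lemma1:
  fixes conv :: "(real \<Rightarrow> complex) \<Rightarrow> (real \<Rightarrow> complex) \<Rightarrow> (real \<Rightarrow> complex)"
    and fh hh :: "real \<Rightarrow> complex"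
    and sh gh :: "nat \<Rightarrow> real \<Rightarrow> complex"
    and r :: nat
  assumes r: "r \<ge> 2"
    and conv_comm: "\<And>a b. conv a b = conv b a"
    and conv_assoc: "\<And>a b c. conv (conv a b) c = conv a (conv b c)"
    and conv_add: "\<And>a b c. conv (a + b) c = conv a c + conv b c"
    and leibniz: "\<And>i. i \<in> {1..r} \<Longrightarrow>
        lmul (gh i) = conv (sh i) (lmul fh) + conv fh (lmul (sh i))"
    and annih: "conv hh fh = (\<lambda>_. 0)"
  shows "\<forall>i\<in>{1..r}. \<forall>j\<in>{1..r}. i \<noteq> j \<longrightarrow>
      conv (conv hh (sh j)) (lmul (gh i)) - conv (conv hh (sh i)) (lmul (gh j)) = (\<lambda>_. 0)"
proof (intro ballI impI)
  fix i j assume i: "i \<in> {1..r}" and j: "j \<in> {1..r}" and "i \<noteq> j"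
  have z: "conv 0 c = 0" for c
  proof -
    have "conv (0+0) c = conv 0 c + conv 0 c" by (rule conv_add)
    thus ?thesis by simp
  qed
  have zf: "(\<lambda>_. 0::complex) = 0" by (simp add: zero_fun_def)
  have addr: "conv a (b + c) = conv a b + conv a c" for a b c
    using conv_add[of b c a] conv_comm by metis
  have k: "conv (conv hh (sh j)) (lmul (gh i)) = conv hh (conv (sh j) (conv (sh i) (lmul fh)))"
       if i: "i \<in> {1..r}" for i j
  proof -
    have "conv (conv hh (sh j)) (lmul (gh i))
       = conv (conv hh (sh j)) (conv (sh i) (lmul fh)) + conv (conv hh (sh j)) (conv fh (lmul (sh i)))"
      using leibniz[OF i] addr by simp
    also have "conv (conv hh (sh j)) (conv fh (lmul (sh i))) = 0"
    proof -
      have "conv (conv hh (sh j)) (conv fh (lmul (sh i))) = conv (conv (conv hh fh) (sh j)) (lmul (sh i))"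
        by (metis conv_assoc conv_comm)
      thus ?thesis using annih z unfolding zf by simp
    qed
    finally show ?thesis by (simp add: conv_assoc)
  qed
  have sw: "conv (sh j) (conv (sh i) x) = conv (sh i) (conv (sh j) x)" for x
    by (metis conv_assoc conv_comm)
  show "conv (conv hh (sh j)) (lmul (gh i)) - conv (conv hh (sh i)) (lmul (gh j)) = (\<lambda>_. 0)"
    using k[OF i, of j] k[OF j, of i] sw unfolding zf by simp
qed

end
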